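(* Let $G=(\mathcal{S},\mathcal{A})$ be a finite directed acyclic graph with a unique state $s_0\in\mathcal{S}$ having no incoming edges, and let $\mathcal{X}\subseteq\mathcal{S}$ be the set of states with no outgoing edges (terminal states), so that every $s\in\mathcal{S}\setminus\mathcal{X}$ has at least one child. Let $R:\mathcal{X}\to(0,\infty)$ be a reward function. Let $F:\mathcal{S}\to(0,\infty)$ be a state flow function, and for each non-terminal state $s\in\mathcal{S}\setminus\mathcal{X}$ let $A(\cdot\mid s)$ be a probability distribution on the children of $s$, i.e. $A(s'\mid s)\ge 0$ for $(s\to s')\in\mathcal{A}$ and $\sum_{s':(s\to s')\in\mathcal{A}}A(s'\mid s)=1$. Define, for every state $s'\neq s_0$, the Bifurcated GFlowNet loss $$\mathcal{L}_{\mathrm{BN}}(s')=\Big(\log\sum_{s:(s\to s')\in\mathcal{A}}F(s)A(s'\mid s)-\log T(s')\Big)^2,$$ where $T(s')=F(s')$ if $s'\notin\mathcal{X}$ and $T(s')=R(s')$ if $s'\in\mathcal{X}$. Suppose $\mathcal{L}_{\mathrm{BN}}(s')=0$ for all states $s'\neq s_0$. Then, for the Markov chain that starts at $s_0$ and, at each non-terminal state $s$, moves to a child $s'$ with probability $A(s'\mid s)$ until it reaches a terminal state, the probability of terminating at $x\in\mathcal{X}$ equals $R(x)/\sum_{y\in\mathcal{X}}R(y)$; that is, the policy $A$ samples terminal states proportionally to the reward.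
   Context: Here $(s\to s')\in\mathcal{A}$ denotes a directed edge (action) from $s$ to $s'$; $s$ is then a parent of $s'$ and $s'$ a child of $s$. The quantity $F(s)A(s'\mid s)$ is interpreted as the edge flow $F(s\to s')$, so the loss condition says that the total inflow into each non-initial, non-terminal state equals its state flow, and the total inflow into each terminal state equals its reward. *)

theory Defs
  imports Complex_Main
begin

definition terminals :: "'a set \<Rightarrow> ('a \<times> 'a) set \<Rightarrow> 'a set" where
  "terminals S E = {s \<in> S. \<forall>t. (s, t) \<notin> E}"

definition inflow :: "('a \<times> 'a) set \<Rightarrow> ('a \<Rightarrow> real) \<Rightarrow> ('a \<Rightarrow> 'a \<Rightarrow> real) \<Rightarrow> 'a \<Rightarrow> real" where
  "inflow E F A s' = (\<Sum>s\<in>{s. (s, s') \<in> E}. F s * A s s')"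

definition bn_loss ::
  "'a set \<Rightarrow> ('a \<times> 'a) set \<Rightarrow> ('a \<Rightarrow> real) \<Rightarrow> ('a \<Rightarrow> real) \<Rightarrow> ('a \<Rightarrow> 'a \<Rightarrow> real) \<Rightarrow> 'a \<Rightarrow> real" where
  "bn_loss S E R F A s' =
     (ln (inflow E F A s') - ln (if s' \<in> terminals S E then R s' else F s')) ^ 2"

definition paths :: "('a \<times> 'a) set \<Rightarrow> 'a \<Rightarrow> 'a \<Rightarrow> 'a list set" where
  "paths E a b = {xs. xs \<noteq> [] \<and> hd xs = a \<and> last xs = b \<and>
                      (\<forall>i < length xs - 1. (xs ! i, xs ! Suc i) \<in> E)}"

definition path_prob :: "('a \<Rightarrow> 'a \<Rightarrow> real) \<Rightarrow> 'a list \<Rightarrow> real" where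
  "path_prob A xs = (\<Prod>i < length xs - 1. A (xs ! i) (xs ! Suc i))"

text \<open>Probability that the Markov chain started at s0 with transition kernel A
  (absorbed at terminal states) terminates at x: sum over all paths s0 \<leadsto> x of
  the product of transition probabilities.\<close>
definition term_prob :: "('a \<times> 'a) set \<Rightarrow> ('a \<Rightarrow> 'a \<Rightarrow> real) \<Rightarrow> 'a \<Rightarrow> 'a \<Rightarrow> real" where
  "term_prob E A s0 x = (\<Sum>p\<in>paths E s0 x. path_prob A p)"

end

theory Submission
  imports Defs
begin

lemma path_trancl:
  assumes "\<forall>k<length xs - 1. (xs!k, xs!Suc k) \<in> E" "i < j" "j < length xs"
  shows "(xs!i, xs!j) \<in> E\<^sup>+"
  using assms(2,3)
proof (induction j)
  case 0 then show ?case by simp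
next
  case (Suc j)
  have e: "(xs!j, xs!Suc j) \<in> E" using assms(1) Suc.prems by auto
  show ?case
  proof (cases "i = j")
    case True then show ?thesis using e by auto
  next
    case False then have "(xs!i, xs!j) \<in> E\<^sup>+" using Suc by auto
    then show ?thesis using e by (meson trancl_into_trancl)
  qed
qed

lemma paths_distinct:
  assumes "acyclic E" "xs \<in> paths E a b" shows "distinct xs"
proof -
  have "\<forall>k<length xs - 1. (xs!k, xs!Suc k) \<in> E" using assms(2) by (simp add: paths_def)
  then show ?thesis unfolding distinct_conv_nth
    by (metis acyclic_def assms(1) linorder_neqE_nat path_trancl)
qed

lemma paths_set:
  assumes "E \<subseteq> S \<times> S" "xs \<in> paths E a b" shows "set xs \<subseteq> insert a S"
proof
  fix x assume "x \<in> set xs"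
  then obtain i where i: "i < length xs" "x = xs!i" by (auto simp: in_set_conv_nth)
  have p: "xs \<noteq> []" "hd xs = a" "\<forall>k<length xs - 1. (xs!k, xs!Suc k) \<in> E"
    using assms(2) by (auto simp: paths_def)
  show "x \<in> insert a S"
  proof (cases i)
    case 0 then show ?thesis using i p by (simp add: hd_conv_nth)
  next
    case (Suc k) then have "(xs!k, xs!i) \<in> E" using p i by auto
    then show ?thesis using assms(1) i by auto
  qed
qed

lemma paths_finite:
  assumes "finite S" "E \<subseteq> S \<times> S" "acyclic E" shows "finite (paths E a b)"
proof -
  have "paths E a b \<subseteq> {xs. set xs \<subseteq> insert a S \<and> length xs \<le> card (insert a S)}"
  proof
    fix xs assume xs: "xs \<in> paths E a b"
    have "set xs \<subseteq> insert a S" using paths_set[OF assms(2) xs] .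
    moreover have "distinct xs" using paths_distinct[OF assms(3) xs] .
    ultimately show "xs \<in> {xs. set xs \<subseteq> insert a S \<and> length xs \<le> card (insert a S)}"
      using assms(1) by (metis (mono_tags) card_mono distinct_card finite_insert mem_Collect_eq)
  qed
  then show ?thesis by (rule finite_subset) (simp add: finite_lists_length_le assms(1))
qed

lemma path_snoc:
  assumes "ys \<noteq> []"
  shows "ys @ [c] \<in> paths E a c \<longleftrightarrow> ys \<in> paths E a (last ys) \<and> (last ys, c) \<in> E"
proof -
  have "(\<forall>i<length ys. ((ys@[c])!i, (ys@[c])!Suc i) \<in> E) \<longleftrightarrow>
        (\<forall>i<length ys - 1. (ys!i, ys!Suc i) \<in> E) \<and> (last ys, c) \<in> E"
  proof -
    have "(\<forall>i<length ys. P i) \<longleftrightarrow> (\<forall>i<length ys - 1. P i) \<and> P (length ys - 1)" for P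
      using assms by (metis One_nat_def Suc_pred length_greater_0_conv less_Suc_eq)
    moreover have "((ys@[c])!i, (ys@[c])!Suc i) = (ys!i, ys!Suc i)" if "i < length ys - 1" for i
      using that by (auto simp: nth_append)
    moreover have "((ys@[c])!(length ys - 1), (ys@[c])!Suc (length ys - 1)) = (last ys, c)"
      using assms by (simp add: nth_append last_conv_nth)
    ultimately show ?thesis by auto
  qed
  then show ?thesis using assms by (simp add: paths_def)
qed

lemma paths_self:
  assumes "acyclic E" shows "paths E a a = {[a]}"
proof
  show "{[a]} \<subseteq> paths E a a" by (simp add: paths_def)
  show "paths E a a \<subseteq> {[a]}"
  proof
    fix xs assume xs: "xs \<in> paths E a a"
    have p: "xs \<noteq> []" "hd xs = a" "last xs = a" "\<forall>k<length xs - 1. (xs!k, xs!Suc k) \<in> E"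
      using xs by (auto simp: paths_def)
    have "length xs = 1"
    proof (rule ccontr)
      assume "length xs \<noteq> 1"
      then have "0 < length xs - 1" using p(1) by (cases xs) auto
      then have "(xs!0, xs!(length xs - 1)) \<in> E\<^sup>+" using path_trancl[OF p(4)] by auto
      moreover have "xs!0 = a" "xs!(length xs - 1) = a" using p by (auto simp: hd_conv_nth last_conv_nth)
      ultimately show False using assms by (auto simp: acyclic_def)
    qed
    then show "xs \<in> {[a]}" using p by (cases xs) auto
  qed
qed

lemma paths_decomp:
  assumes "c \<noteq> a"
  shows "paths E a c = (\<Union>s\<in>{s. (s,c)\<in>E}. (\<lambda>p. p@[c]) ` paths E a s)"
proof
  show "paths E a c \<subseteq> (\<Union>s\<in>{s. (s,c)\<in>E}. (\<lambda>p. p@[c]) ` paths E a s)"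
  proof
    fix xs assume xs: "xs \<in> paths E a c"
    have p: "xs \<noteq> []" "hd xs = a" "last xs = c" using xs by (auto simp: paths_def)
    define ys where "ys = butlast xs"
    have xe: "xs = ys @ [c]" using p by (metis append_butlast_last_id ys_def)
    have "ys \<noteq> []" using p assms xe by auto
    then have "ys \<in> paths E a (last ys) \<and> (last ys, c) \<in> E" using path_snoc xs xe by metis
    then show "xs \<in> (\<Union>s\<in>{s. (s,c)\<in>E}. (\<lambda>p. p@[c]) ` paths E a s)" using xe by auto
  qed
  show "(\<Union>s\<in>{s. (s,c)\<in>E}. (\<lambda>p. p@[c]) ` paths E a s) \<subseteq> paths E a c"
  proof
    fix xs assume "xs \<in> (\<Union>s\<in>{s. (s,c)\<in>E}. (\<lambda>p. p@[c]) ` paths E a s)"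
    then obtain s p where sp: "(s,c)\<in>E" "p \<in> paths E a s" "xs = p@[c]" by auto
    have "p \<noteq> []" "last p = s" using sp by (auto simp: paths_def)
    then show "xs \<in> paths E a c" using path_snoc sp by metis
  qed
qed

lemma path_prob_snoc:
  assumes "p \<noteq> []" shows "path_prob A (p@[c]) = path_prob A p * A (last p) c"
proof -
  have l: "length (p@[c]) - 1 = Suc (length p - 1)" using assms by simp
  have "path_prob A (p@[c]) = (\<Prod>i<length p - 1. A ((p@[c])!i) ((p@[c])!Suc i)) * A ((p@[c])!(length p - 1)) ((p@[c])!Suc (length p - 1))"
    unfolding path_prob_def l by simp
  also have "(\<Prod>i<length p - 1. A ((p@[c])!i) ((p@[c])!Suc i)) = path_prob A p"
    unfolding path_prob_def by (rule prod.cong) (auto simp: nth_append)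
  also have "A ((p@[c])!(length p - 1)) ((p@[c])!Suc (length p - 1)) = A (last p) c"
    using assms by (simp add: nth_append last_conv_nth)
  finally show ?thesis .
qed

lemma term_prob_rec:
  assumes "finite S" "E \<subseteq> S \<times> S" "acyclic E" "c \<noteq> a"
  shows "term_prob E A a c = (\<Sum>s\<in>{s. (s,c)\<in>E}. term_prob E A a s * A s c)"
proof -
  have "{s. (s,c)\<in>E} \<subseteq> S" using assms(2) by auto
  then have fin: "finite {s. (s,c)\<in>E}" using assms(1) by (rule finite_subset)
  have "term_prob E A a c = (\<Sum>s\<in>{s. (s,c)\<in>E}. sum (path_prob A) ((\<lambda>p. p@[c]) ` paths E a s))"
    unfolding term_prob_def paths_decomp[OF assms(4)]
  proof (rule sum.UNION_disjoint[OF fin])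
    show "\<forall>i\<in>{s. (s, c) \<in> E}. finite ((\<lambda>p. p @ [c]) ` paths E a i)"
      using paths_finite[OF assms(1-3)] by auto
    show "\<forall>i\<in>{s. (s, c) \<in> E}. \<forall>j\<in>{s. (s, c) \<in> E}. i \<noteq> j \<longrightarrow>
        (\<lambda>p. p @ [c]) ` paths E a i \<inter> (\<lambda>p. p @ [c]) ` paths E a j = {}"
      by (auto simp: paths_def)
  qed
  also have "\<dots> = (\<Sum>s\<in>{s. (s,c)\<in>E}. term_prob E A a s * A s c)"
  proof (rule sum.cong[OF refl])
    fix s assume "s \<in> {s. (s,c)\<in>E}"
    have "sum (path_prob A) ((\<lambda>p. p@[c]) ` paths E a s) = (\<Sum>p\<in>paths E a s. path_prob A (p@[c]))"
      by (subst sum.reindex) (auto simp: inj_on_def)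
    also have "\<dots> = (\<Sum>p\<in>paths E a s. path_prob A p * A s c)"
      by (rule sum.cong) (auto simp: paths_def path_prob_snoc)
    finally show "sum (path_prob A) ((\<lambda>p. p@[c]) ` paths E a s) = term_prob E A a s * A s c"
      by (simp add: term_prob_def sum_distrib_right)
  qed
  finally show ?thesis .
qed


theorem theorem4p1:
  fixes S :: "'a set" and E :: "('a \<times> 'a) set" and s0 :: 'a
    and R F :: "'a \<Rightarrow> real" and A :: "'a \<Rightarrow> 'a \<Rightarrow> real"
  assumes finS: "finite S"
    and E_sub: "E \<subseteq> S \<times> S"
    and acyc: "acyclic E"
    and s0S: "s0 \<in> S"
    and source: "\<forall>s\<in>S. (\<forall>p. (p, s) \<notin> E) \<longleftrightarrow> s = s0"
    and R_pos: "\<forall>x\<in>terminals S E. R x > 0"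
    and F_pos: "\<forall>s\<in>S. F s > 0"
    and A_nonneg: "\<forall>(s, s')\<in>E. A s s' \<ge> 0"
    and A_sum: "\<forall>s\<in>S - terminals S E. (\<Sum>s'\<in>{s'. (s, s') \<in> E}. A s s') = 1"
    and inflow_pos: "\<forall>s'\<in>S - {s0}. inflow E F A s' > 0"
    and loss_zero: "\<forall>s'\<in>S - {s0}. bn_loss S E R F A s' = 0"
  shows "\<forall>x\<in>terminals S E.
           term_prob E A s0 x = R x / (\<Sum>y\<in>terminals S E. R y)"
proof -
  define T where "T s = (if s \<in> terminals S E then R s else F s)" for s
  have finE: "finite E" using finS E_sub by (meson finite_SigmaI finite_subset)
  have wfE: "wf E" using finE acyc by (rule finite_acyclic_wf)
  have tp0: "term_prob E A s0 s0 = 1"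
    by (simp add: term_prob_def paths_self[OF acyc] path_prob_def)
  have reach: "s \<in> S \<longrightarrow> (s0, s) \<in> E\<^sup>*" for s
    using wfE
  proof (induction s rule: wf_induct_rule)
    case (less s)
    show ?case
    proof
      assume sS: "s \<in> S"
      show "(s0, s) \<in> E\<^sup>*"
      proof (cases "s = s0")
        case True then show ?thesis by simp
      next
        case False
        then obtain p where "(p, s) \<in> E" using source sS by blast
        moreover then have "p \<in> S" using E_sub by auto
        ultimately show ?thesis using less by (meson rtrancl.rtrancl_into_rtrancl)
      qed
    qed
  qed
  show ?thesis
  proof (cases "s0 \<in> terminals S E")
    case True
    then have "\<forall>t. (s0, t) \<notin> E" by (simp add: terminals_def)
    then have "S = {s0}" using reach s0S by (auto elim: converse_rtranclE)
    then have "terminals S E = {s0}" using True by (auto simp: terminals_def)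
    then show ?thesis using tp0 R_pos by auto
  next
    case False
    have TI: "inflow E F A s = T s" if "s \<in> S - {s0}" for s
    proof -
      have "T s > 0" using that R_pos F_pos by (auto simp: T_def terminals_def)
      moreover have "inflow E F A s > 0" using that inflow_pos by auto
      moreover have "ln (inflow E F A s) = ln (T s)"
        using loss_zero that by (simp add: bn_loss_def T_def)
      ultimately show ?thesis by simp
    qed
    have main: "s \<in> S \<longrightarrow> term_prob E A s0 s * F s0 = T s" for s
      using wfE
    proof (induction s rule: wf_induct_rule)
      case (less s)
      show ?case
      proof
        assume sS: "s \<in> S"
        show "term_prob E A s0 s * F s0 = T s"
        proof (cases "s = s0")
          case True then show ?thesis using tp0 False by (simp add: T_def)
        next
          case ne: False
          have "term_prob E A s0 s * F s0 = (\<Sum>p\<in>{p. (p,s)\<in>E}. term_prob E A s0 p * F s0 * A p s)"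
            unfolding term_prob_rec[OF finS E_sub acyc ne] sum_distrib_right by (simp add: ac_simps)
          also have "\<dots> = (\<Sum>p\<in>{p. (p,s)\<in>E}. F p * A p s)"
          proof (rule sum.cong[OF refl])
            fix p assume "p \<in> {p. (p,s)\<in>E}"
            then have "(p,s) \<in> E" "p \<in> S" "p \<notin> terminals S E" using E_sub by (auto simp: terminals_def)
            then show "term_prob E A s0 p * F s0 * A p s = F p * A p s"
              using less by (auto simp: T_def)
          qed
          also have "\<dots> = T s" using TI sS ne by (simp add: inflow_def)
          finally show ?thesis .
        qed
      qed
    qed
    define h where "h x y = (if (x,y)\<in>E then F x * A x y else 0)" for x y
    have inS: "inflow E F A y = (\<Sum>x\<in>S. h x y)" for y
    proof -
      have "{x. (x,y)\<in>E} = {x\<in>S. (x,y)\<in>E}" using E_sub by auto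
      then show ?thesis unfolding inflow_def h_def using finS by (simp add: sum.inter_filter)
    qed
    have outS: "(\<Sum>y\<in>S. h x y) = (if x \<in> terminals S E then 0 else F x)" if "x \<in> S" for x
    proof -
      have "{y. (x,y)\<in>E} = {y\<in>S. (x,y)\<in>E}" using E_sub by auto
      then have "(\<Sum>y\<in>S. h x y) = F x * (\<Sum>y\<in>{y. (x,y)\<in>E}. A x y)"
        unfolding h_def using finS by (simp add: sum.inter_filter sum_distrib_left if_distrib cong: if_cong)
      then show ?thesis using A_sum that by (auto simp: terminals_def)
    qed
    have "(\<Sum>y\<in>S. inflow E F A y) = (\<Sum>x\<in>S. if x \<in> terminals S E then 0 else F x)"
      unfolding inS by (subst sum.swap) (simp add: outS)
    also have "\<dots> = F s0 + (\<Sum>x\<in>S - terminals S E - {s0}. F x)"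
    proof -
      have "(\<Sum>x\<in>S. if x \<in> terminals S E then 0 else F x) = (\<Sum>x\<in>S - terminals S E. F x)"
        using finS by (simp add: sum.If_cases Diff_eq)
      also have "\<dots> = F s0 + (\<Sum>x\<in>S - terminals S E - {s0}. F x)"
        using finS s0S False by (meson DiffI finite_Diff sum.remove)
      finally show ?thesis .
    qed
    finally have c1: "(\<Sum>y\<in>S. inflow E F A y) = F s0 + (\<Sum>x\<in>S - terminals S E - {s0}. F x)" .
    have "{s. (s, s0) \<in> E} = {}" using source s0S by auto
    then have "inflow E F A s0 = 0" by (simp add: inflow_def)
    then have "(\<Sum>y\<in>S. inflow E F A y) = (\<Sum>y\<in>S - {s0}. T y)"
      using finS s0S TI by (simp add: sum.remove)
    also have "\<dots> = (\<Sum>y\<in>terminals S E. R y) + (\<Sum>x\<in>S - terminals S E - {s0}. F x)"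
    proof -
      have "(\<Sum>y\<in>S - {s0}. T y) = (\<Sum>y\<in>(S - {s0}) \<inter> {y. y \<in> terminals S E}. R y) + (\<Sum>y\<in>(S - {s0}) \<inter> - {y. y \<in> terminals S E}. F y)"
        unfolding T_def using finS by (simp add: sum.If_cases)
      moreover have "(S - {s0}) \<inter> {y. y \<in> terminals S E} = terminals S E"
        using False by (auto simp: terminals_def)
      moreover have "(S - {s0}) \<inter> - {y. y \<in> terminals S E} = S - terminals S E - {s0}" by auto
      ultimately show ?thesis by simp
    qed
    finally have "(\<Sum>y\<in>terminals S E. R y) = F s0" using c1 by simp
    moreover have "F s0 > 0" using F_pos s0S by auto
    ultimately show ?thesis using main
      by (auto simp: T_def terminals_def field_simps)
  qed
qed

end
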